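(* For every integer $n\ge1$, the proportion $P(0,n)$ of invertible matrices in $(\mathbb F_2)^{n\times n}$ satisfies $$P(0,n)>2^{-8/7}e^{-19/42}.$$
   Context: $P(d,n)$ denotes the proportion of matrices in $(\mathbb F_2)^{n\times n}$ whose null space has dimension $d$. *)

theory Defs
  imports "HOL-Analysis.Analysis" "HOL-Library.Z2"
begin

text \<open>F_2 is the field type bit. n x n matrices over F_2 are bit^'n^'n with n = CARD('n).\<close>

definition P :: "nat \<Rightarrow> 'n::finite itself \<Rightarrow> real" where
  "P d _ = real (card {A :: bit^'n^'n. vec.dim {x. A *v x = 0} = d})
           / real (card (UNIV :: (bit^'n^'n) set))"

end

theory Submission
  imports Defs
begin


lemma UNIV_bit: "(UNIV :: bit set) = {0, 1}"
proof -
  have "x = 0 \<or> x = 1" for x :: bit by (cases x) auto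
  thus ?thesis by auto
qed
lemma CARD_bit: "CARD(bit) = 2" by (simp add: UNIV_bit)

instance bit :: finite by standard (simp add: UNIV_bit)

definition lc :: "(nat \<Rightarrow> bit^'n) \<Rightarrow> nat \<Rightarrow> (nat \<Rightarrow> bit) \<Rightarrow> bit^'n" where
  "lc g k c = (\<Sum>i<k. c i *s g i)"
definition Ind :: "(nat \<Rightarrow> bit^'n) \<Rightarrow> nat \<Rightarrow> bool" where
  "Ind g k = (\<forall>c. lc g k c = 0 \<longrightarrow> (\<forall>i<k. c i = 0))"
definition Sp :: "(nat \<Rightarrow> bit^'n) \<Rightarrow> nat \<Rightarrow> (bit^'n) set" where
  "Sp g k = lc g k ` ({..<k} \<rightarrow>\<^sub>E UNIV)"
definition FF :: "nat \<Rightarrow> (nat \<Rightarrow> bit^'n) set" where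
  "FF k = {g \<in> {..<k} \<rightarrow>\<^sub>E UNIV. Ind g k}"

lemma lc_cong: "(\<And>i. i < k \<Longrightarrow> c i = d i) \<Longrightarrow> (\<And>i. i < k \<Longrightarrow> g i = h i) \<Longrightarrow> lc g k c = lc h k d"
  unfolding lc_def by (intro sum.cong) auto

lemma lc_Suc: "lc g (Suc k) c = lc g k c + c k *s g k"
  unfolding lc_def by simp

lemma lc_diff: "lc g k (\<lambda>i. c i - d i) = lc g k c - lc g k d"
  unfolding lc_def by (simp only: vec.scale_left_diff_distrib sum_subtractf)

lemma lc_upd: "lc (g(k:=v)) k c = lc g k c"
  by (rule lc_cong) auto
lemma lc_upd': "lc (g(k:=v)) k = lc g k"
  by (rule ext) (rule lc_upd)
lemma Sp_upd: "Sp (g(k:=v)) k = Sp g k"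
  unfolding Sp_def lc_upd' ..
lemma Ind_upd: "Ind (g(k:=v)) k = Ind g k"
  unfolding Ind_def lc_upd' ..

lemma card_Sp: assumes "Ind g k" shows "card (Sp g k) = 2^k"
proof -
  have "inj_on (lc g k) ({..<k} \<rightarrow>\<^sub>E UNIV)"
  proof (rule inj_onI)
    fix c d assume c: "c \<in> {..<k} \<rightarrow>\<^sub>E UNIV" and d: "d \<in> {..<k} \<rightarrow>\<^sub>E UNIV" and e: "lc g k c = lc g k d"
    have "lc g k (\<lambda>i. c i - d i) = 0" unfolding lc_diff e by (rule diff_self)
    hence "\<forall>i<k. c i - d i = 0" using assms unfolding Ind_def by blast
    hence "\<forall>i<k. c i = d i" by (metis right_minus_eq)
    thus "c = d" using c d by (intro PiE_ext[OF c d]) auto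
  qed
  hence "card (Sp g k) = card ({..<k} \<rightarrow>\<^sub>E (UNIV::bit set))" unfolding Sp_def by (rule card_image)
  also have "... = 2^k" by (simp add: card_PiE CARD_bit)
  finally show ?thesis .
qed

lemma Ind_Suc: "Ind g (Suc k) \<longleftrightarrow> Ind g k \<and> g k \<notin> Sp g k"
proof
  assume H: "Ind g (Suc k)"
  have "Ind g k" unfolding Ind_def
  proof (intro allI impI)
    fix c i assume c: "lc g k c = 0" and i: "i < k"
    have "lc g (Suc k) (c(k:=0)) = lc g k (c(k:=0))" by (simp add: lc_Suc)
    also have "... = lc g k c" by (rule lc_cong) auto
    finally have "lc g (Suc k) (c(k:=0)) = 0" using c by simp
    hence "(c(k:=0)) i = 0" using H i unfolding Ind_def by (metis less_SucI)
    thus "c i = 0" using i by simp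
  qed
  moreover have "g k \<notin> Sp g k"
  proof
    assume "g k \<in> Sp g k"
    then obtain c where c: "g k = lc g k c" unfolding Sp_def by auto
    have "lc g (Suc k) (c(k:=1)) = lc g k (c(k:=1)) + g k" by (simp add: lc_Suc)
    also have "lc g k (c(k:=1)) = lc g k c" by (rule lc_cong) auto
    also have "lc g k c = g k" by (rule c[symmetric])
    also have "g k + g k = 0" by (simp add: vec_eq_iff)
    finally have "lc g (Suc k) (c(k:=1)) = 0" .
    hence "(c(k:=1)) k = 0" using H unfolding Ind_def by blast
    thus False by simp
  qed
  ultimately show "Ind g k \<and> g k \<notin> Sp g k" ..
next
  assume H: "Ind g k \<and> g k \<notin> Sp g k"
  show "Ind g (Suc k)" unfolding Ind_def
  proof (intro allI impI)
    fix c i assume c: "lc g (Suc k) c = 0" and i: "i < Suc k"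
    have ck: "c k = 0"
    proof (rule ccontr)
      assume "c k \<noteq> 0"
      hence "c k = 1" by simp
      hence "lc g k c + g k = 0" using c by (simp add: lc_Suc)
      moreover have "g k + g k = 0" by (simp add: vec_eq_iff)
      ultimately have "lc g k c + g k = g k + g k" by simp
      hence "g k = lc g k c" by (rule add_right_imp_eq[symmetric])
      moreover have "lc g k c = lc g k (restrict c {..<k})" by (rule lc_cong) auto
      moreover have "restrict c {..<k} \<in> {..<k} \<rightarrow>\<^sub>E UNIV" by simp
      ultimately have "g k \<in> Sp g k" unfolding Sp_def by auto
      thus False using H by simp
    qed
    hence "lc g k c = 0" using c by (simp add: lc_Suc)
    hence "\<forall>i<k. c i = 0" using H unfolding Ind_def by blast
    thus "c i = 0" using ck i by (cases "i = k") auto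
  qed
qed


lemma finite_Sp: "finite (Sp g k)" by simp

lemma FF_Suc: "FF (Suc k) = (\<lambda>(g,v). g(k:=v)) ` (SIGMA g:FF k. UNIV - Sp g k)"
proof (intro equalityI subsetI)
  fix h assume h: "h \<in> FF (Suc k)"
  define g where "g = h(k:=undefined)"
  have hg: "h = g(k := h k)" unfolding g_def by simp
  have "g \<in> {..<k} \<rightarrow>\<^sub>E UNIV" using h unfolding FF_def g_def PiE_def extensional_def by auto
  moreover have "Ind h (Suc k)" using h unfolding FF_def by simp
  hence "Ind g k" "h k \<notin> Sp g k" using Ind_upd[of g k "h k"] Sp_upd[of g k "h k"] hg Ind_Suc[of h k] by auto
  ultimately have "(g, h k) \<in> (SIGMA g:FF k. UNIV - Sp g k)" unfolding FF_def by auto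
  thus "h \<in> (\<lambda>(g,v). g(k:=v)) ` (SIGMA g:FF k. UNIV - Sp g k)"
    by (rule image_eqI[rotated]) (simp flip: hg)
next
  fix h assume "h \<in> (\<lambda>(g,v). g(k:=v)) ` (SIGMA g:FF k. UNIV - Sp g k)"
  then obtain g v where h: "h = g(k:=v)" and g: "g \<in> FF k" and v: "v \<notin> Sp g k" by auto
  have "h \<in> {..<Suc k} \<rightarrow>\<^sub>E UNIV" using g unfolding h FF_def PiE_def extensional_def by auto
  moreover have "Ind h (Suc k)" unfolding Ind_Suc h Ind_upd Sp_upd using g v unfolding FF_def by simp
  ultimately show "h \<in> FF (Suc k)" unfolding FF_def by simp
qed

lemma card_FF: "card (FF k :: (nat \<Rightarrow> bit^'n) set) = (\<Prod>i<k. 2^CARD('n) - 2^i)"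
proof (induction k)
  case 0
  have "FF 0 = ({..<0} \<rightarrow>\<^sub>E (UNIV :: (bit^'n) set))" unfolding FF_def Ind_def by auto
  thus ?case by simp
next
  case (Suc k)
  have inj: "inj_on (\<lambda>(g,v). g(k:=v)) (SIGMA g:(FF k :: (nat \<Rightarrow> bit^'n) set). UNIV - Sp g k)"
  proof (rule inj_onI, clarify)
    fix g v g' v' assume g: "g \<in> FF k" and g': "g' \<in> FF k" and e: "g(k := v) = g'(k := v')"
    have "v = v'" using fun_cong[OF e, of k] by simp
    moreover have "g k = g' k" using g g' unfolding FF_def PiE_def extensional_def by auto
    hence "g = g'" using e by (metis fun_upd_triv fun_upd_upd)
    ultimately show "g = g' \<and> v = v'" by simp
  qed
  have fin: "finite (FF k :: (nat \<Rightarrow> bit^'n) set)" unfolding FF_def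
    by (rule finite_subset[OF _ finite_PiE[of "{..<k}" "\<lambda>_. UNIV"]]) auto
  have "card (FF (Suc k) :: (nat \<Rightarrow> bit^'n) set) = card (SIGMA g:(FF k :: (nat \<Rightarrow> bit^'n) set). UNIV - Sp g k)"
    unfolding FF_Suc by (rule card_image[OF inj])
  also have "... = (\<Sum>g\<in>(FF k :: (nat \<Rightarrow> bit^'n) set). card (UNIV - Sp g k))" using fin by (subst card_SigmaI) auto
  also have "... = (\<Sum>g\<in>(FF k :: (nat \<Rightarrow> bit^'n) set). 2^CARD('n) - 2^k)"
  proof (rule sum.cong)
    fix g assume "g \<in> (FF k :: (nat \<Rightarrow> bit^'n) set)"
    hence "Ind g k" unfolding FF_def by simp
    thus "card (UNIV - Sp g k) = 2^CARD('n) - 2^k"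
      by (simp add: card_Diff_subset card_Sp CARD_bit)
  qed simp
  also have "... = card (FF k :: (nat \<Rightarrow> bit^'n) set) * (2^CARD('n) - 2^k)" by simp
  finally show ?case using Suc by simp
qed



lemma card_inv: "card {A :: bit^'n^'n. vec.dim {x. A *v x = 0} = 0} = (\<Prod>i<CARD('n). 2^CARD('n) - 2^i)"
proof -
  define n where "n = CARD('n)"
  obtain e where e0: "bij_betw e {0..<card (UNIV::'n set)} (UNIV::'n set)"
    using ex_bij_betw_nat_finite[of "UNIV::'n set"] by auto
  have e: "bij_betw e {..<n} (UNIV::'n set)" using e0 unfolding n_def atLeast0LessThan .
  define e' where "e' = inv_into {..<n} e"
  have e'e: "e' (e i) = i" if "i < n" for i
    unfolding e'_def using e that by (simp add: bij_betw_inv_into_left)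
  have ee': "e (e' j) = j" for j
    unfolding e'_def using e by (simp add: bij_betw_inv_into_right)
  have e'n: "e' j < n" for j
    unfolding e'_def using e by (metis bij_betw_def inv_into_into lessThan_iff UNIV_I)
  define \<Phi> :: "bit^'n^'n \<Rightarrow> nat \<Rightarrow> bit^'n" where "\<Phi> A = restrict (\<lambda>i. column (e i) A) {..<n}" for A
  have mv: "A *v x = lc (\<Phi> A) n (\<lambda>i. x $ e i)" for A x
  proof -
    have "A *v x = (\<Sum>j\<in>UNIV. x $ j *s column j A)" by (rule matrix_mult_sum)
    also have "... = (\<Sum>i<n. x $ e i *s column (e i) A)"
      by (rule sum.reindex_bij_betw[OF e, symmetric])
    also have "... = lc (\<Phi> A) n (\<lambda>i. x $ e i)" unfolding lc_def \<Phi>_def by (rule sum.cong) auto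
    finally show ?thesis .
  qed
  have dim: "vec.dim {x. A *v x = 0} = 0 \<longleftrightarrow> (\<forall>x. A *v x = 0 \<longrightarrow> x = 0)" for A :: "bit^'n^'n"
    by (auto simp: vec.dim_eq_0)
  have ind: "Ind (\<Phi> A) n \<longleftrightarrow> (\<forall>x. A *v x = 0 \<longrightarrow> x = 0)" for A
  proof
    assume H: "Ind (\<Phi> A) n"
    show "\<forall>x. A *v x = 0 \<longrightarrow> x = 0"
    proof (intro allI impI)
      fix x assume "A *v x = 0"
      hence "lc (\<Phi> A) n (\<lambda>i. x $ e i) = 0" by (simp add: mv)
      hence z: "\<forall>i<n. x $ e i = 0" using H unfolding Ind_def by blast
      show "x = 0" unfolding vec_eq_iff
      proof
        fix j show "x $ j = 0 $ j" using z[rule_format, OF e'n[of j]] by (simp add: ee')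
      qed
    qed
  next
    assume H: "\<forall>x. A *v x = 0 \<longrightarrow> x = 0"
    show "Ind (\<Phi> A) n" unfolding Ind_def
    proof (intro allI impI)
      fix c i assume c: "lc (\<Phi> A) n c = 0" and i: "i < n"
      define x :: "bit^'n" where "x = (\<chi> j. c (e' j))"
      have "lc (\<Phi> A) n (\<lambda>i. x $ e i) = lc (\<Phi> A) n c"
        by (rule lc_cong) (simp_all add: x_def e'e)
      hence "A *v x = 0" using c by (simp add: mv)
      hence "x = 0" using H by blast
      hence "x $ e i = 0" by simp
      thus "c i = 0" using i by (simp add: x_def e'e)
    qed
  qed
  have inj: "inj \<Phi>"
  proof (rule injI)
    fix A B assume AB: "\<Phi> A = \<Phi> B"
    have "column (e i) A = column (e i) B" if "i < n" for i
      using fun_cong[OF AB, of i] that unfolding \<Phi>_def by simp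
    hence col: "column j A = column j B" for j using e'n[of j] ee'[of j] by metis
    have "A $ r $ j = B $ r $ j" for r j
      using arg_cong[OF col[of j], of "\<lambda>v. v $ r"] by (simp add: column_def)
    thus "A = B" by (simp add: vec_eq_iff)
  qed
  have img: "\<Phi> ` {A. vec.dim {x. A *v x = 0} = 0} = FF n"
  proof (intro equalityI subsetI)
    fix g assume "g \<in> \<Phi> ` {A. vec.dim {x. A *v x = 0} = 0}"
    then obtain A where g: "g = \<Phi> A" and A: "vec.dim {x. A *v x = 0} = 0" by auto
    have "Ind g n" using A unfolding g ind dim .
    moreover have "g \<in> {..<n} \<rightarrow>\<^sub>E UNIV" unfolding g \<Phi>_def by simp
    ultimately show "g \<in> FF n" unfolding FF_def by simp
  next
    fix g :: "nat \<Rightarrow> bit^'n" assume g: "g \<in> FF n"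
    define A :: "bit^'n^'n" where "A = (\<chi> r. \<chi> j. g (e' j) $ r)"
    have "\<Phi> A = g"
    proof (rule ext)
      fix i show "\<Phi> A i = g i"
      proof (cases "i < n")
        case True
        have "column (e i) A = g i" unfolding column_def A_def by (simp add: e'e[OF True])
        thus ?thesis using True unfolding \<Phi>_def by simp
      next
        case False
        have "g i = undefined" using g False unfolding FF_def by (intro PiE_arb[of g "{..<n}" "\<lambda>_. UNIV"]) auto
        thus ?thesis using False unfolding \<Phi>_def by simp
      qed
    qed
    moreover have "Ind (\<Phi> A) n" using g \<open>\<Phi> A = g\<close> unfolding FF_def by simp
    hence "vec.dim {x. A *v x = 0} = 0" unfolding ind dim .
    ultimately show "g \<in> \<Phi> ` {A. vec.dim {x. A *v x = 0} = 0}" by blast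
  qed
  have "card {A :: bit^'n^'n. vec.dim {x. A *v x = 0} = 0} = card (\<Phi> ` {A. vec.dim {x. A *v x = 0} = 0})"
    by (rule card_image[symmetric]) (rule inj_on_subset[OF inj subset_UNIV])
  also have "... = card (FF n :: (nat \<Rightarrow> bit^'n) set)" unfolding img ..
  also have "... = (\<Prod>i<CARD('n). 2^CARD('n) - 2^i)" unfolding card_FF n_def ..
  finally show ?thesis .
qed


lemma exp_lb: "(\<Sum>n<5. inverse (fact n) * (19/42::real)^n) \<le> exp (19/42)"
proof -
  have "(\<Sum>n<5. inverse (fact n) * (19/42::real)^n) \<le> (\<Sum>n. inverse (fact n) * (19/42::real)^n)"
    by (intro sum_le_suminf[OF summable_exp]) auto
  thus ?thesis by (simp add: exp_def scaleR_conv_of_real field_simps)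
qed
lemma exp_ub: "exp (-19/42::real) \<le> 6365/10000"
proof -
  have s: "(\<Sum>n<5. inverse (fact n) * (19/42::real)^n) = 1 + 19/42 + (19/42)^2/2 + (19/42)^3/6 + (19/42)^4/24"
    by (simp add: numeral_eq_Suc fact_numeral)
  have c: "(10000/6365::real) \<le> 1 + 19/42 + (19/42)^2/2 + (19/42)^3/6 + (19/42)^4/24"
    by (simp add: power_divide)
  have "10000/6365 \<le> exp (19/42::real)" using exp_lb c unfolding s by linarith
  hence "inverse (exp (19/42::real)) \<le> inverse (10000/6365)"
    by (intro le_imp_inverse_le) auto
  thus ?thesis by (simp add: exp_minus[symmetric])
qed
lemma pow_ub: "2 powr (-8/7::real) < 4529/10000"
proof -
  have "(2 powr (-8/7::real))^7 = 2 powr (-8)"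
    by (simp add: powr_realpow[symmetric] powr_powr)
  also have "... = 1/256" by (simp add: powr_minus powr_realpow)
  finally have e: "(2 powr (-8/7::real))^7 = 1/256" .
  have "(2 powr (-8/7::real))^7 < (4529/10000)^7" unfolding e by (simp add: power_divide)
  thus ?thesis by (rule power_less_imp_less_base) simp
qed
lemma bound: "2 powr (-8/7) * exp (-19/42) < (2887/10000::real)"
proof -
  have "2 powr (-8/7) * exp (-19/42) \<le> (4529/10000) * (6365/10000::real)"
    using pow_ub exp_ub by (intro mult_mono) auto
  also have "... < 2887/10000" by simp
  finally show ?thesis .
qed

definition Q :: "nat \<Rightarrow> real" where "Q n = (\<Prod>i<n. 1 - (1/2)^Suc i)"
lemma Q_Suc: "Q (Suc n) = Q n * (1 - (1/2)^Suc n)" by (simp add: Q_def)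
lemma Q_nonneg: "0 \<le> Q n"
proof -
  have "(1/2::real)^Suc i \<le> 1" for i by (rule power_le_one) auto
  thus ?thesis unfolding Q_def by (intro prod_nonneg) auto
qed
lemma Q_mono: "Q (n+d) \<le> Q n"
proof (induction d)
  case (Suc d)
  have "Q (n + Suc d) = Q (n+d) * (1 - (1/2)^Suc (n+d))" by (simp add: Q_Suc)
  also have "... \<le> Q (n+d)" using Q_nonneg[of "n+d"]
    by (intro mult_left_le) auto
  finally show ?case using Suc by simp
qed simp
lemma Q_tail: "Q k * (1 - (1/2)^k + (1/2)^(k+d)) \<le> Q (k+d)"
proof (induction d)
  case 0 then show ?case by simp
next
  case (Suc d)
  define a :: real where "a = (1/2)^k"
  define b :: real where "b = (1/2)^(k+d)"
  have ab: "b \<le> a" "0 \<le> b" "b \<le> 1" unfolding a_def b_def by (auto simp: power_decreasing power_le_one)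
  have e1: "(1/2::real)^(k + Suc d) = b/2" by (simp add: b_def)
  have e2: "(1/2::real)^Suc (k + d) = b/2" by (simp add: b_def)
  have key: "1 - a + b/2 \<le> (1 - a + b) * (1 - b/2)"
  proof -
    have "0 \<le> b * (a - b)" using ab by simp
    moreover have "(1-a+b)*(1-b/2) - (1-a+b/2) = b*(a-b)/2" by (simp add: field_simps)
    ultimately show ?thesis by linarith
  qed
  have "Q k * (1 - a + b/2) \<le> Q k * ((1 - a + b) * (1 - b/2))"
    using key Q_nonneg by (intro mult_left_mono) auto
  also have "... = (Q k * (1 - a + b)) * (1 - b/2)" by simp
  also have "... \<le> Q (k+d) * (1 - b/2)"
    using Suc.IH ab unfolding a_def b_def by (intro mult_right_mono) auto
  also have "... = Q (k + Suc d)" by (simp add: Q_Suc e2 b_def)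
  finally show ?case by (simp add: a_def e1 b_def)
qed
lemma Q_lb: "2887/10000 < Q n"
proof -
  have Q6: "Q 6 = 615195/2097152" by (simp add: Q_def numeral_eq_Suc)
  have "2887/10000 < Q 6 * (63/64)" unfolding Q6 by simp
  also have "Q 6 * (63/64) \<le> Q (max n 6)"
  proof -
    obtain d where d: "max n 6 = 6 + d" by (metis le_Suc_ex max.cobounded2)
    have z: "0 \<le> (1/2::real)^(6+d)" by simp
    have "(1/2::real)^6 = 1/64" by (simp add: power_divide)
    hence "(63/64::real) \<le> 1 - (1/2)^6 + (1/2)^(6+d)" using z by linarith
    hence "Q 6 * (63/64) \<le> Q 6 * (1 - (1/2)^6 + (1/2)^(6+d))"
      using Q_nonneg[of 6] by (intro mult_left_mono) auto
    also have "... \<le> Q (max n 6)" unfolding d by (rule Q_tail)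
    finally show ?thesis .
  qed
  also have "... \<le> Q n"
  proof -
    obtain d where d: "max n 6 = n + d" by (metis le_Suc_ex max.cobounded1)
    show ?thesis unfolding d by (rule Q_mono)
  qed
  finally show ?thesis .
qed

lemma P0_eq: "P 0 TYPE('n::finite) = Q CARD('n)"
proof -
  define n where "n = CARD('n)"
  have cu: "card (UNIV :: (bit^'n^'n) set) = (2^n)^n" by (simp add: CARD_bit n_def)
  have "real (\<Prod>i<n. 2^n - 2^i :: nat) = (\<Prod>i<n. (2::real)^n - 2^i)"
    unfolding of_nat_prod by (rule prod.cong) (auto simp: of_nat_diff)
  hence "P 0 TYPE('n) = (\<Prod>i<n. (2::real)^n - 2^i) / (\<Prod>i<n. (2::real)^n)"
    unfolding P_def card_inv cu n_def[symmetric] by simp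
  also have "... = (\<Prod>i<n. ((2::real)^n - 2^i) / 2^n)" by (rule prod_dividef[symmetric])
  also have "... = (\<Prod>i<n. 1 - (1/2::real)^Suc (n - Suc i))"
  proof (rule prod.cong)
    fix i assume "i \<in> {..<n}"
    hence i: "i < n" by simp
    have s: "Suc (n - Suc i) = n - i" using i by simp
    have "(2::real)^i / 2^n = 1 / 2^(n-i)" using i by (simp add: power_diff)
    thus "((2::real)^n - 2^i) / 2^n = 1 - (1/2::real)^Suc (n - Suc i)"
      unfolding s by (simp add: diff_divide_distrib power_one_over)
  qed simp
  also have "... = Q n" unfolding Q_def by (rule prod.nat_diff_reindex)
  finally show ?thesis unfolding n_def .
qed

theorem mainTheorem11:
  shows "P 0 TYPE('n::finite) > 2 powr (-8/7) * exp (-19/42)"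
proof -
  have "P 0 TYPE('n) = Q CARD('n)" by (rule P0_eq)
  thus ?thesis using bound Q_lb[of "CARD('n)"] by linarith
qed

end
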